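(* Let $\mathcal{D}$ be any distribution over pairs $(x,y)$ with $x\in\mathcal{X}\subseteq\mathbb{R}^d$ and $y\in\{1,\dots,k\}$, and let $h:\mathcal{X}\to\{-1,1\}$ be any hypothesis. Let $\pi_i=P(y=i)$ and $\beta=P(h(x)>0)$, and let \[ J(h)=2\sum_{i=1}^k \pi_i\,\bigl|P(h(x)>0)-P(h(x)>0\mid i)\bigr|. \] Then \[ \beta\in\Bigl[\tfrac12\bigl(1-\sqrt{1-J(h)}\bigr),\ \tfrac12\bigl(1+\sqrt{1-J(h)}\bigr)\Bigr]. \]
   Context: $P(h(x)>0\mid i)$ denotes the probability that $h(x)>0$ conditional on the label being $i$. It is known that $J(h)\in[0,1]$. *)

theory Defs
  imports "HOL-Probability.Probability"
begin

text \<open>Conditional probability P(A | B) = P(A \<inter> B) / P(B) (0 if P(B) = 0).\<close>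
definition cond_prob :: "'a measure \<Rightarrow> 'a set \<Rightarrow> 'a set \<Rightarrow> real" where
  "cond_prob M A B = measure M (A \<inter> B) / measure M B"

end

theory Submission
  imports Defs
begin

lemma key_ineq:
  fixes a p :: "'i \<Rightarrow> real" and b :: real
  assumes fin: "finite I" and a0: "\<And>i. i \<in> I \<Longrightarrow> 0 \<le> a i" and ap: "\<And>i. i \<in> I \<Longrightarrow> a i \<le> p i"
    and sp: "(\<Sum>i\<in>I. p i) = 1" and sa: "(\<Sum>i\<in>I. a i) = b"
  shows "(\<Sum>i\<in>I. \<bar>b * p i - a i\<bar>) \<le> 2 * b * (1 - b)"
proof -
  define S where "S = {i\<in>I. a i > b * p i}"
  have SI: "S \<subseteq> I" and finS: "finite S" and finT: "finite (I - S)" using fin by (auto simp: S_def)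
  have split: "(\<Sum>i\<in>I. f i) = (\<Sum>i\<in>S. f i) + (\<Sum>i\<in>I - S. f i)" for f :: "'i \<Rightarrow> real"
    using sum.subset_diff[OF SI fin, of f] by simp
  have tot: "(\<Sum>i\<in>I. b * p i - a i) = 0" using sp sa by (simp add: sum_subtractf sum_distrib_left[symmetric])
  have "(\<Sum>i\<in>I. \<bar>b * p i - a i\<bar>) = (\<Sum>i\<in>S. a i - b * p i) + (\<Sum>i\<in>I - S. b * p i - a i)"
    by (subst split) (auto intro!: sum.cong simp: S_def)
  also have "(\<Sum>i\<in>I - S. b * p i - a i) = (\<Sum>i\<in>S. a i - b * p i)"
    using tot split[of "\<lambda>i. b * p i - a i"] by (simp add: sum_subtractf)
  finally have eq0: "(\<Sum>i\<in>I. \<bar>b * p i - a i\<bar>) = 2 * (\<Sum>i\<in>S. a i - b * p i)" by simp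
  have "(\<Sum>i\<in>S. a i - b * p i) = (\<Sum>i\<in>S. a i) - b * (\<Sum>i\<in>S. p i)"
    by (simp add: sum_subtractf sum_distrib_left)
  with eq0 have eq: "(\<Sum>i\<in>I. \<bar>b * p i - a i\<bar>) = 2 * ((\<Sum>i\<in>S. a i) - b * (\<Sum>i\<in>S. p i))" by simp
  define A where "A = (\<Sum>i\<in>S. a i)"
  define P where "P = (\<Sum>i\<in>S. p i)"
  have AP: "A \<le> P" unfolding A_def P_def using SI ap by (intro sum_mono) auto
  have A0: "0 \<le> A" unfolding A_def using SI a0 by (intro sum_nonneg) auto
  have "0 \<le> (\<Sum>i\<in>I - S. a i)" using a0 by (intro sum_nonneg) auto
  then have Ab: "A \<le> b" using split[of a] sa unfolding A_def by linarith
  have b0: "0 \<le> b" unfolding sa[symmetric] using a0 by (intro sum_nonneg) auto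
  have b1: "b \<le> 1" unfolding sa[symmetric] sp[symmetric] using ap by (intro sum_mono) auto
  have "A - b * P \<le> b * (1 - b)"
  proof (cases "P \<le> b")
    case True
    have "A - b * P \<le> P - b * P" using AP by simp
    also have "\<dots> = P * (1 - b)" by algebra
    also have "\<dots> \<le> b * (1 - b)" using True b1 by (intro mult_right_mono) auto
    finally show ?thesis .
  next
    case False
    have "A - b * P \<le> b - b * P" using Ab by simp
    also have "\<dots> \<le> b - b * b" using False b0 by (simp add: mult_left_mono)
    finally show ?thesis by (simp add: algebra_simps)
  qed
  then show ?thesis using eq unfolding A_def P_def by simp
qed

theorem lemma2:
  fixes D :: "((real ^ 'd::finite) \<times> nat) measure"
    and X :: "(real ^ 'd::finite) set"
    and h :: "real ^ 'd::finite \<Rightarrow> real"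
    and k :: nat
  assumes "prob_space D"
    and "AE p in D. fst p \<in> X"
    and "AE p in D. snd p \<in> {1..k}"
    and "\<forall>x\<in>X. h x = 1 \<or> h x = -1"
    and "(\<lambda>p. h (fst p)) \<in> borel_measurable D"
    and "snd \<in> measurable D (count_space UNIV)"
  shows
    "let pos = {p \<in> space D. h (fst p) > 0};
         lab = (\<lambda>i. {p \<in> space D. snd p = i});
         \<pi> = (\<lambda>i. measure D (lab i));
         \<beta> = measure D pos;
         J = 2 * (\<Sum>i=1..k. \<pi> i * \<bar>\<beta> - cond_prob D pos (lab i)\<bar>)
     in \<beta> \<in> {(1 - sqrt (1 - J)) / 2 .. (1 + sqrt (1 - J)) / 2}"
proof -
  interpret prob_space D by fact
  define pos where "pos = {p \<in> space D. h (fst p) > 0}"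
  define lab where "lab = (\<lambda>i::nat. {p \<in> space D. snd p = i})"
  define \<beta> where "\<beta> = measure D pos"
  have posM: "pos \<in> sets D"
  proof -
    have "(\<lambda>p. h (fst p)) -` {0<..} \<inter> space D \<in> sets D"
      using measurable_sets[OF assms(5), of "{0<..}"] by simp
    moreover have "(\<lambda>p. h (fst p)) -` {0<..} \<inter> space D = pos" unfolding pos_def by auto
    ultimately show ?thesis by simp
  qed
  have labM: "lab i \<in> sets D" for i
  proof -
    have "snd -` {i} \<inter> space D \<in> sets D" using measurable_sets[OF assms(6), of "{i}"] by simp
    moreover have "snd -` {i} \<inter> space D = lab i" unfolding lab_def by auto
    ultimately show ?thesis by simp
  qed
  have disj: "disjoint_family_on lab I" for I unfolding lab_def disjoint_family_on_def by auto
  have posdisj: "disjoint_family_on (\<lambda>i. pos \<inter> lab i) I" for I unfolding lab_def disjoint_family_on_def by auto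
  have U: "(\<Union>i\<in>{1..k}. lab i) = {p \<in> space D. snd p \<in> {1..k}}" unfolding lab_def by auto
  have UM: "{p \<in> space D. snd p \<in> {1..k}} \<in> sets D"
  proof -
    have "snd -` {1..k} \<inter> space D \<in> sets D" using measurable_sets[OF assms(6), of "{1..k}"] by simp
    moreover have "snd -` {1..k} \<inter> space D = {p \<in> space D. snd p \<in> {1..k}}" by auto
    ultimately show ?thesis by simp
  qed
  have U1: "measure D {p \<in> space D. snd p \<in> {1..k}} = 1"
    using prob_Collect_eq_1[OF UM] assms(3) by simp
  have sp: "(\<Sum>i\<in>{1..k}. measure D (lab i)) = 1"
    using finite_measure_finite_Union[of "{1..k}" lab] labM disj U U1 by auto
  have "measure D pos = measure D (pos \<inter> {p \<in> space D. snd p \<in> {1..k}})"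
  proof -
    have "measure D (pos \<inter> {p \<in> space D. snd p \<in> {1..k}}) = measure D pos"
    proof (rule measure_eq_AE)
      show "AE x in D. (x \<in> pos \<inter> {p \<in> space D. snd p \<in> {1..k}}) = (x \<in> pos)"
        using AE_space assms(3) by eventually_elim auto
    qed (use UM posM in auto)
    then show ?thesis by simp
  qed
  also have "pos \<inter> {p \<in> space D. snd p \<in> {1..k}} = (\<Union>i\<in>{1..k}. pos \<inter> lab i)"
    unfolding U[symmetric] by auto
  also have "measure D \<dots> = (\<Sum>i\<in>{1..k}. measure D (pos \<inter> lab i))"
    using posM labM posdisj by (intro finite_measure_finite_Union) auto
  finally have sa: "(\<Sum>i\<in>{1..k}. measure D (pos \<inter> lab i)) = \<beta>" unfolding \<beta>_def by simp
  have trm: "measure D (lab i) * \<bar>\<beta> - cond_prob D pos (lab i)\<bar>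
      = \<bar>\<beta> * measure D (lab i) - measure D (pos \<inter> lab i)\<bar>" for i
  proof (cases "measure D (lab i) = 0")
    case True
    then have "measure D (pos \<inter> lab i) = 0"
      using finite_measure_mono[of "pos \<inter> lab i" "lab i"] labM by (simp add: measure_nonneg antisym)
    then show ?thesis using True by simp
  next
    case False
    have "measure D (lab i) * \<bar>\<beta> - cond_prob D pos (lab i)\<bar>
        = \<bar>measure D (lab i) * (\<beta> - cond_prob D pos (lab i))\<bar>"
      by (simp add: abs_mult)
    also have "measure D (lab i) * (\<beta> - cond_prob D pos (lab i)) = \<beta> * measure D (lab i) - measure D (pos \<inter> lab i)"
      using False unfolding cond_prob_def by (simp add: field_simps)
    finally show ?thesis .
  qed
  define J where "J = 2 * (\<Sum>i=1..k. measure D (lab i) * \<bar>\<beta> - cond_prob D pos (lab i)\<bar>)"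
  have "J = 2 * (\<Sum>i\<in>{1..k}. \<bar>\<beta> * measure D (lab i) - measure D (pos \<inter> lab i)\<bar>)"
    unfolding J_def using trm by simp
  also have "\<dots> \<le> 2 * (2 * \<beta> * (1 - \<beta>))"
  proof -
    have "(\<Sum>i\<in>{1..k}. \<bar>\<beta> * measure D (lab i) - measure D (pos \<inter> lab i)\<bar>) \<le> 2 * \<beta> * (1 - \<beta>)"
    proof (rule key_ineq)
      show "\<And>i. i \<in> {1..k} \<Longrightarrow> measure D (pos \<inter> lab i) \<le> measure D (lab i)"
        using labM by (intro finite_measure_mono) auto
    qed (use sp sa in auto)
    then show ?thesis by simp
  qed
  finally have J: "J \<le> 4 * \<beta> * (1 - \<beta>)" by simp
  have "(2 * \<beta> - 1)^2 \<le> 1 - J" using J by (simp add: power2_eq_square algebra_simps)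
  then have "sqrt ((2 * \<beta> - 1)^2) \<le> sqrt (1 - J)" by (rule real_sqrt_le_mono)
  then have "\<bar>2 * \<beta> - 1\<bar> \<le> sqrt (1 - J)" by (simp only: real_sqrt_abs)
  then have "\<beta> \<in> {(1 - sqrt (1 - J)) / 2 .. (1 + sqrt (1 - J)) / 2}" by auto
  then show ?thesis unfolding pos_def lab_def J_def \<beta>_def Let_def by simp
qed

end
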